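(* Let $\mathcal{I}$ be a finite index set and, for each $i\in\mathcal{I}$, let $\mathcal{A}_i$ be a finite set with $|\mathcal{A}_i|\ge 2$. Let $\mathcal{Y}\subseteq\mathcal{I}$, let $h_i:\mathcal{A}_i\to(0,\infty)$ for $i\in\mathcal{Y}$, and let $\mathcal{B}\subseteq\prod_{i\in\mathcal{I}}\mathcal{A}_i$ be a set of configurations such that the projection $\mathbf{P}_{\mathcal{Y}}(\mathbf{x})=(x_i)_{i\in\mathcal{Y}}$ is injective on $\mathcal{B}$. For each $i\in\mathcal{Y}$ fix $\alpha_i\in\mathcal{A}_i$ and put $\mathcal{A}_i^-=\mathcal{A}_i\setminus\{\alpha_i\}$. Define $\boldsymbol{\Xi}(\mathbf{x}_{\mathcal{Y}})=\big(([\gamma=x_i])_{\gamma\in\mathcal{A}_i}\big)_{i\in\mathcal{Y}}\in\{0,1\}^{\sum_{i\in\mathcal{Y}}|\mathcal{A}_i|}$ and $\tilde{\boldsymbol{\Xi}}(\mathbf{x}_{\mathcal{Y}})=\big(([\gamma=x_i])_{\gamma\in\mathcal{A}_i^-}\big)_{i\in\mathcal{Y}}\in\{0,1\}^{\sum_{i\in\mathcal{Y}}|\mathcal{A}_i^-|}$, where $[P]$ is $1$ if $P$ holds and $0$ otherwise. Let $\boldsymbol{\lambda}$ have coordinates $\lambda_i^{(\alpha)}=\log h_i(\alpha)$ ($i\in\mathcal{Y},\alpha\in\mathcal{A}_i$) and $\tilde{\boldsymbol{\lambda}}$ have coordinates $\tilde\lambda_i^{(\alpha)}=\log\big(h_i(\alpha)/h_i(\alpha_i)\big)$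 ($i\in\mathcal{Y},\alpha\in\mathcal{A}_i^-$). Let $\mathcal{K}_{\mathcal{Y}}(\mathcal{B})$ be the convex hull of $\{\boldsymbol{\Xi}(\mathbf{P}_{\mathcal{Y}}(\mathbf{x})):\mathbf{x}\in\mathcal{B}\}$ and $\tilde{\mathcal{K}}_{\mathcal{Y}}(\mathcal{B})$ the convex hull of $\{\tilde{\boldsymbol{\Xi}}(\mathbf{P}_{\mathcal{Y}}(\mathbf{x})):\mathbf{x}\in\mathcal{B}\}$. Consider LP1: maximize $\boldsymbol{\lambda}\mathbf{g}^T$ over $\mathbf{g}\in\mathcal{K}_{\mathcal{Y}}(\mathcal{B})$, with output configuration $\mathbf{P}_{\mathcal{Y}}^{-1}(\boldsymbol{\Xi}^{-1}(\mathbf{g}_{\mathrm{opt}}))$ for the maximizer $\mathbf{g}_{\mathrm{opt}}$; and LP2: maximize $\tilde{\boldsymbol{\lambda}}\tilde{\mathbf{g}}^T$ over $\tilde{\mathbf{g}}\in\tilde{\mathcal{K}}_{\mathcal{Y}}(\mathcal{B})$, with output configuration $\mathbf{P}_{\mathcal{Y}}^{-1}(\tilde{\boldsymbol{\Xi}}^{-1}(\tilde{\mathbf{g}}_{\mathrm{opt}}))$ for the maximizer $\tilde{\mathbf{g}}_{\mathrm{opt}}$. Then LP2 produces the same (optimum) configuration output as LP1, namely a configuration $\mathbf{x}_{\mathrm{opt}}\in\mathcal{B}$ maximizing $\sum_{i\in\mathcal{Y}}\log h_i(x_i)$ over $\mathcal{B}$.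
   Context: This arises from the problem of maximizing a global function $u(\mathbf{x})=\prod_{i\in\mathcal{Y}}h_i(x_i)\prod_{j\in\mathcal{L}}[\mathbf{x}_j\in\mathcal{B}_j]$ over configurations $\mathbf{x}=(x_i)_{i\in\mathcal{I}}\in\prod_i\mathcal{A}_i$, where $\mathcal{Y}$ is the set of variables attached to degree-one (pendant) factor nodes of the factor graph, $h_i$ is the product of those pendant factors, and $\mathcal{B}$ is the set of configurations satisfying all non-pendant indicator factors; maximizing $u$ is equivalent to maximizing $\sum_{i\in\mathcal{Y}}\log h_i(x_i)$ over $\mathcal{B}$. $\mathbf{P}_{\mathcal{Y}}^{-1}$ denotes the inverse of $\mathbf{P}_{\mathcal{Y}}$ restricted to $\mathcal{B}$. *)

theory Defs
  imports "HOL-Analysis.Analysis" "HOL-Library.Function_Algebras"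
begin

text \<open>Real vectors indexed by an arbitrary coordinate type are modelled as functions
  into the reals; we equip them with the pointwise real vector space structure so that
  the library notion \<open>convex hull\<close> applies.\<close>

instantiation "fun" :: (type, real_vector) real_vector
begin
definition scaleR_fun :: "real \<Rightarrow> ('a \<Rightarrow> 'b) \<Rightarrow> 'a \<Rightarrow> 'b"
  where "scaleR_fun r f = (\<lambda>x. r *\<^sub>R f x)"
instance
  by standard (auto simp: scaleR_fun_def fun_eq_iff scaleR_add_right scaleR_add_left)
end

definition coords :: "'i set \<Rightarrow> ('i \<Rightarrow> 'a set) \<Rightarrow> ('i \<times> 'a) set" where
  "coords Y C = Sigma Y C"

text \<open>Indicator embedding Xi (with C = A) or tilde-Xi (with C i = A i - {alpha i}) of x_Y;
  coordinates outside \<open>coords Y C\<close> are 0.\<close>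
definition Xi :: "'i set \<Rightarrow> ('i \<Rightarrow> 'a set) \<Rightarrow> ('i \<Rightarrow> 'a) \<Rightarrow> ('i \<times> 'a \<Rightarrow> real)" where
  "Xi Y C xY = (\<lambda>(i, \<gamma>). if i \<in> Y \<and> \<gamma> \<in> C i then (if \<gamma> = xY i then 1 else 0) else 0)"

definition proj :: "'i set \<Rightarrow> ('i \<Rightarrow> 'a) \<Rightarrow> ('i \<Rightarrow> 'a)" where
  "proj Y x = restrict x Y"

definition dotp :: "('i \<times> 'a) set \<Rightarrow> ('i \<times> 'a \<Rightarrow> real) \<Rightarrow> ('i \<times> 'a \<Rightarrow> real) \<Rightarrow> real" where
  "dotp S l g = (\<Sum>p\<in>S. l p * g p)"

definition is_lp_max :: "('i \<times> 'a) set \<Rightarrow> ('i \<times> 'a \<Rightarrow> real) \<Rightarrow> ('i \<times> 'a \<Rightarrow> real) set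
    \<Rightarrow> ('i \<times> 'a \<Rightarrow> real) \<Rightarrow> bool" where
  "is_lp_max S l K g \<longleftrightarrow> g \<in> K \<and> (\<forall>g'\<in>K. dotp S l g' \<le> dotp S l g)"

end

theory Submission
  imports Defs
begin

lemma dotp_comb:
  "dotp S l (u *\<^sub>R g + v *\<^sub>R k) = u * dotp S l g + v * dotp S l k"
  by (simp add: dotp_def scaleR_fun_def plus_fun_def algebra_simps sum.distrib sum_distrib_left)

lemma hull_le:
  assumes "\<forall>v\<in>V. dotp S l v \<le> M" "g \<in> convex hull V"
  shows "dotp S l g \<le> M"
proof -
  have "convex {g. dotp S l g \<le> M}"
  proof (rule convexI)
    fix x y and u v :: real
    assume "x \<in> {g. dotp S l g \<le> M}" "y \<in> {g. dotp S l g \<le> M}" "0 \<le> u" "0 \<le> v" "u + v = 1"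
    hence "u * dotp S l x + v * dotp S l y \<le> u * M + v * M"
      by (intro add_mono mult_left_mono) auto
    thus "u *\<^sub>R x + v *\<^sub>R y \<in> {g. dotp S l g \<le> M}"
      using \<open>u + v = 1\<close> by (simp add: dotp_comb distrib_right[symmetric])
  qed
  moreover have "V \<subseteq> {g. dotp S l g \<le> M}" using assms(1) by auto
  ultimately have "convex hull V \<subseteq> {g. dotp S l g \<le> M}" by (rule hull_minimal[rotated])
  thus ?thesis using assms(2) by auto
qed

lemma lp_max_iff:
  assumes "x \<in> B"
  shows "is_lp_max S l (convex hull (F ` B)) (F x) \<longleftrightarrow> (\<forall>x'\<in>B. dotp S l (F x') \<le> dotp S l (F x))"
  unfolding is_lp_max_def
proof safe
  show "F x \<in> convex hull F ` B" using assms by (intro hull_inc) auto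
next
  fix x' assume "\<forall>g'\<in>convex hull F ` B. dotp S l g' \<le> dotp S l (F x)" "x' \<in> B"
  thus "dotp S l (F x') \<le> dotp S l (F x)" by (meson hull_inc image_eqI)
next
  fix g' assume "\<forall>x'\<in>B. dotp S l (F x') \<le> dotp S l (F x)" "g' \<in> convex hull F ` B"
  thus "dotp S l g' \<le> dotp S l (F x)" by (intro hull_le[of "F ` B"]) auto
qed

lemma dot_inner:
  assumes "finite C"
  shows "(\<Sum>\<gamma>\<in>C. f \<gamma> * (if \<gamma> = c then 1 else 0)) = (if c \<in> C then f c else (0::real))"
  using assms by (simp add: if_distrib[of "\<lambda>t. f _ * t"] sum.delta' cong: if_cong)

theorem proposition1:
  fixes I :: "'i set" and A :: "'i \<Rightarrow> 'a set" and Y :: "'i set"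
    and h :: "'i \<Rightarrow> 'a \<Rightarrow> real" and B :: "('i \<Rightarrow> 'a) set" and \<alpha> :: "'i \<Rightarrow> 'a"
  assumes finI: "finite I"
    and finA: "\<And>i. i \<in> I \<Longrightarrow> finite (A i)"
    and cardA: "\<And>i. i \<in> I \<Longrightarrow> card (A i) \<ge> 2"
    and YI: "Y \<subseteq> I"
    and hpos: "\<And>i a. i \<in> Y \<Longrightarrow> a \<in> A i \<Longrightarrow> h i a > 0"
    and BA: "B \<subseteq> (\<Pi>\<^sub>E i\<in>I. A i)"
    and inj: "inj_on (proj Y) B"
    and alpha: "\<And>i. i \<in> Y \<Longrightarrow> \<alpha> i \<in> A i"
  defines "Am \<equiv> (\<lambda>i. A i - {\<alpha> i})"
    and "lam \<equiv> (\<lambda>(i, a). ln (h i a))"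
    and "lamt \<equiv> (\<lambda>(i, a). ln (h i a / h i (\<alpha> i)))"
    and "K \<equiv> convex hull ((\<lambda>x. Xi Y A (proj Y x)) ` B)"
    and "Kt \<equiv> convex hull ((\<lambda>x. Xi Y (\<lambda>i. A i - {\<alpha> i}) (proj Y x)) ` B)"
  shows "(\<forall>x\<in>B.
            (is_lp_max (coords Y Am) lamt Kt (Xi Y Am (proj Y x))
               \<longleftrightarrow> is_lp_max (coords Y A) lam K (Xi Y A (proj Y x)))
          \<and> (is_lp_max (coords Y A) lam K (Xi Y A (proj Y x))
               \<longleftrightarrow> (\<forall>x'\<in>B. (\<Sum>i\<in>Y. ln (h i (x' i))) \<le> (\<Sum>i\<in>Y. ln (h i (x i))))))
       \<and> (B \<noteq> {} \<longrightarrow> (\<exists>x\<in>B. is_lp_max (coords Y Am) lamt Kt (Xi Y Am (proj Y x))))"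
proof -
  define obj where "obj x = (\<Sum>i\<in>Y. ln (h i (x i)))" for x
  have finY: "finite Y" using finI YI finite_subset by blast
  have finAY: "\<And>i. i \<in> Y \<Longrightarrow> finite (A i)" using finA YI by auto
  have xA: "\<And>x i. x \<in> B \<Longrightarrow> i \<in> Y \<Longrightarrow> x i \<in> A i" using BA YI by (auto simp: PiE_def Pi_def)
  have d1: "dotp (coords Y A) lam (Xi Y A (proj Y x)) = obj x" if "x \<in> B" for x
  proof -
    have "dotp (coords Y A) lam (Xi Y A (proj Y x))
        = (\<Sum>i\<in>Y. \<Sum>\<gamma>\<in>A i. ln (h i \<gamma>) * (if \<gamma> = x i then 1 else 0))"
      unfolding dotp_def coords_def using finY finAY
      by (subst sum.Sigma) (auto simp: lam_def Xi_def proj_def intro!: sum.cong)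
    also have "\<dots> = obj x" unfolding obj_def
      using finAY xA[OF that] by (intro sum.cong) (auto simp: dot_inner)
    finally show ?thesis .
  qed
  have d2: "dotp (coords Y Am) lamt (Xi Y Am (proj Y x)) = obj x - (\<Sum>i\<in>Y. ln (h i (\<alpha> i)))"
    if "x \<in> B" for x
  proof -
    have "dotp (coords Y Am) lamt (Xi Y Am (proj Y x))
        = (\<Sum>i\<in>Y. \<Sum>\<gamma>\<in>Am i. ln (h i \<gamma> / h i (\<alpha> i)) * (if \<gamma> = x i then 1 else 0))" (is "_ = ?rhs")
    proof -
      have fa: "\<forall>i\<in>Y. finite (Am i)" using finAY by (auto simp: Am_def)
      have "dotp (coords Y Am) lamt (Xi Y Am (proj Y x))
          = (\<Sum>(i,\<gamma>)\<in>Sigma Y Am. ln (h i \<gamma> / h i (\<alpha> i)) * (if \<gamma> = x i then 1 else 0))"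
        unfolding dotp_def coords_def
      proof (intro sum.cong refl)
        fix p assume "p \<in> Sigma Y Am"
        then obtain i g where "p = (i,g)" "i \<in> Y" "g \<in> Am i" by auto
        thus "lamt p * Xi Y Am (proj Y x) p = (case p of (i,\<gamma>) \<Rightarrow> ln (h i \<gamma> / h i (\<alpha> i)) * (if \<gamma> = x i then 1 else 0))"
          by (simp add: lamt_def Xi_def proj_def)
      qed
      also have "\<dots> = ?rhs" using finY fa by (subst sum.Sigma) auto
      finally show ?thesis .
    qed
    also have "\<dots> = (\<Sum>i\<in>Y. ln (h i (x i)) - ln (h i (\<alpha> i)))"
    proof (intro sum.cong refl)
      fix i assume i: "i \<in> Y"
      have p1: "h i (x i) > 0" "h i (\<alpha> i) > 0" using hpos[OF i] xA[OF that i] alpha[OF i] by auto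
      show "(\<Sum>\<gamma>\<in>Am i. ln (h i \<gamma> / h i (\<alpha> i)) * (if \<gamma> = x i then 1 else 0))
            = ln (h i (x i)) - ln (h i (\<alpha> i))"
        using finAY[OF i] xA[OF that i] p1
        by (subst dot_inner) (auto simp: Am_def ln_div)
    qed
    also have "\<dots> = obj x - (\<Sum>i\<in>Y. ln (h i (\<alpha> i)))"
      unfolding obj_def by (simp add: sum_subtractf)
    finally show ?thesis .
  qed
  have K1: "is_lp_max (coords Y A) lam K (Xi Y A (proj Y x)) \<longleftrightarrow> (\<forall>x'\<in>B. obj x' \<le> obj x)"
    if "x \<in> B" for x
    unfolding K_def using lp_max_iff[OF that, of "coords Y A" lam "\<lambda>x. Xi Y A (proj Y x)"]
    d1 that by auto
  have K2: "is_lp_max (coords Y Am) lamt Kt (Xi Y Am (proj Y x)) \<longleftrightarrow> (\<forall>x'\<in>B. obj x' \<le> obj x)"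
    if "x \<in> B" for x
  proof -
    have "Kt = convex hull ((\<lambda>x. Xi Y Am (proj Y x)) ` B)" unfolding Kt_def Am_def by simp
    thus ?thesis using lp_max_iff[OF that, of "coords Y Am" lamt "\<lambda>x. Xi Y Am (proj Y x)"]
      d2 that by auto
  qed
  have finB: "finite B"
    using finite_subset[OF BA] finite_PiE[OF finI] finA by blast
  have ex: "\<exists>x\<in>B. \<forall>x'\<in>B. obj x' \<le> obj x" if "B \<noteq> {}"
  proof -
    have "Max (obj ` B) \<in> obj ` B" using finB that by auto
    then obtain x where "x \<in> B" "obj x = Max (obj ` B)" by auto
    moreover have "\<forall>x'\<in>B. obj x' \<le> Max (obj ` B)" using finB by auto
    ultimately show ?thesis by metis
  qed
  show ?thesis using K1 K2 ex unfolding obj_def by blast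
qed

end
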